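(* Let $\Gamma\rightrightarrows M$ be a Lie groupoid, $E$ a differentiable vector bundle over $M$ with a smooth metric $\phi$, and $\lambda$ a unital continuous pseudo-representation of $\Gamma$ on $E$ with $c(\lambda)<1$. Then for all $g\in\Gamma$, $\|\lambda(g)^{-1}\|\le\dfrac{b(\lambda)}{1-c(\lambda)}$, and for all $g,h$ with $sg=sh$, $\|\Delta^\lambda(g,h)\|\le c(\lambda)\dfrac{b(\lambda)}{1-c(\lambda)}$, with the convention $0\cdot\infty=0$.
   Context: A pseudo-representation is a family of linear maps $\lambda_g:E_{sg}\to E_{tg}$ forming a section of $L(s^*E,t^*E)$; unital means $\lambda_{1_x}=\mathrm{id}$. (Under the hypotheses each $\lambda_g$ is invertible.) Operator norms $\|\cdot\|$ on $L(E_x,E_y)$ are induced by $\phi$. $b(\lambda):=\sup_{g\in\Gamma}\|\lambda(g)\|$ and $c(\lambda):=\sup\{\|\lambda(g'g)-\lambda(g')\lambda(g)\|:sg'=tg\}$ (possibly infinite). $\Delta^\lambda(g,h):=\lambda_g\lambda_h^{-1}-\lambda_{gh^{-1}}:E_{th}\to E_{tg}$. *)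

theory Defs
  imports "HOL-Analysis.Analysis"
begin

definition groupoid ::
  "'g set \<Rightarrow> 'm set \<Rightarrow> ('g \<Rightarrow> 'm) \<Rightarrow> ('g \<Rightarrow> 'm) \<Rightarrow> ('g \<Rightarrow> 'g \<Rightarrow> 'g)
   \<Rightarrow> ('m \<Rightarrow> 'g) \<Rightarrow> ('g \<Rightarrow> 'g) \<Rightarrow> bool" where
  "groupoid \<Gamma> M s t gmul u i \<longleftrightarrow>
     (\<forall>g\<in>\<Gamma>. s g \<in> M \<and> t g \<in> M) \<and>
     (\<forall>x\<in>M. u x \<in> \<Gamma> \<and> s (u x) = x \<and> t (u x) = x) \<and>
     (\<forall>g'\<in>\<Gamma>. \<forall>g\<in>\<Gamma>. s g' = t g \<longrightarrow>
         gmul g' g \<in> \<Gamma> \<and> s (gmul g' g) = s g \<and> t (gmul g' g) = t g') \<and>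
     (\<forall>g''\<in>\<Gamma>. \<forall>g'\<in>\<Gamma>. \<forall>g\<in>\<Gamma>. s g'' = t g' \<longrightarrow> s g' = t g \<longrightarrow>
         gmul (gmul g'' g') g = gmul g'' (gmul g' g)) \<and>
     (\<forall>g\<in>\<Gamma>. gmul g (u (s g)) = g \<and> gmul (u (t g)) g = g) \<and>
     (\<forall>g\<in>\<Gamma>. i g \<in> \<Gamma> \<and> s (i g) = t g \<and> t (i g) = s g \<and>
         gmul g (i g) = u (t g) \<and> gmul (i g) g = u (s g))"

text \<open>A vector bundle with metric, fibrewise: each fibre E x is a finite-dimensional
  linear subspace of a real inner product space (the metric is the ambient inner product).\<close>
definition metric_bundle :: "'m set \<Rightarrow> ('m \<Rightarrow> 'v::real_inner set) \<Rightarrow> bool" where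
  "metric_bundle M E \<longleftrightarrow> (\<forall>x\<in>M. subspace (E x) \<and> (\<exists>B. finite B \<and> E x = span B))"

definition linear_map_on :: "'v::real_vector set \<Rightarrow> 'w::real_vector set \<Rightarrow> ('v \<Rightarrow> 'w) \<Rightarrow> bool" where
  "linear_map_on A B f \<longleftrightarrow> f ` A \<subseteq> B \<and>
     (\<forall>x\<in>A. \<forall>y\<in>A. f (x + y) = f x + f y) \<and> (\<forall>c. \<forall>x\<in>A. f (c *\<^sub>R x) = c *\<^sub>R f x)"

definition opnorm_on :: "'v::real_normed_vector set \<Rightarrow> ('v \<Rightarrow> 'w::real_normed_vector) \<Rightarrow> real" where
  "opnorm_on A f = Sup ((\<lambda>v. norm (f v)) ` {v \<in> A. norm v \<le> 1})"

definition unital_pseudo_rep ::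
  "'g set \<Rightarrow> 'm set \<Rightarrow> ('g \<Rightarrow> 'm) \<Rightarrow> ('g \<Rightarrow> 'm) \<Rightarrow> ('m \<Rightarrow> 'g) \<Rightarrow> ('m \<Rightarrow> 'v::real_vector set)
   \<Rightarrow> ('g \<Rightarrow> 'v \<Rightarrow> 'v) \<Rightarrow> bool" where
  "unital_pseudo_rep \<Gamma> M s t u E lam \<longleftrightarrow>
     (\<forall>g\<in>\<Gamma>. linear_map_on (E (s g)) (E (t g)) (lam g)) \<and>
     (\<forall>x\<in>M. \<forall>v\<in>E x. lam (u x) v = v)"

definition b_const :: "'g set \<Rightarrow> ('g \<Rightarrow> 'm) \<Rightarrow> ('m \<Rightarrow> 'v::real_normed_vector set)
   \<Rightarrow> ('g \<Rightarrow> 'v \<Rightarrow> 'v) \<Rightarrow> ereal" where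
  "b_const \<Gamma> s E lam = (SUP g\<in>\<Gamma>. ereal (opnorm_on (E (s g)) (lam g)))"

definition c_const :: "'g set \<Rightarrow> ('g \<Rightarrow> 'm) \<Rightarrow> ('g \<Rightarrow> 'm) \<Rightarrow> ('g \<Rightarrow> 'g \<Rightarrow> 'g)
   \<Rightarrow> ('m \<Rightarrow> 'v::real_normed_vector set) \<Rightarrow> ('g \<Rightarrow> 'v \<Rightarrow> 'v) \<Rightarrow> ereal" where
  "c_const \<Gamma> s t gmul E lam =
     (SUP p\<in>{(g', g). g' \<in> \<Gamma> \<and> g \<in> \<Gamma> \<and> s g' = t g}.
        ereal (opnorm_on (E (s (snd p)))
          (\<lambda>v. lam (gmul (fst p) (snd p)) v - lam (fst p) (lam (snd p) v))))"

definition Delta :: "('g \<Rightarrow> 'm) \<Rightarrow> ('g \<Rightarrow> 'g \<Rightarrow> 'g) \<Rightarrow> ('g \<Rightarrow> 'g)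
   \<Rightarrow> ('m \<Rightarrow> 'v::real_vector set) \<Rightarrow> ('g \<Rightarrow> 'v \<Rightarrow> 'v) \<Rightarrow> 'g \<Rightarrow> 'g \<Rightarrow> 'v \<Rightarrow> 'v" where
  "Delta s gmul i E lam g h =
     (\<lambda>v. lam g (inv_into (E (s h)) (lam h) v) - lam (gmul g (i h)) v)"

end

theory Submission
  imports Defs
begin

lemma lmo_zero: assumes "linear_map_on A T f" "0 \<in> A" shows "f 0 = 0"
proof -
  have "f (0 *\<^sub>R 0) = 0 *\<^sub>R f 0" using assms unfolding linear_map_on_def by blast
  then show ?thesis by simp
qed

lemma ext_lin:
  assumes "subspace S" "S = span B0" "finite B0" "linear_map_on S T f"
  shows "\<exists>g. linear g \<and> (\<forall>x\<in>S. g x = f x)"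
proof -
  obtain C where C: "C \<subseteq> S" "independent C" "S \<subseteq> span C"
    using real_vector.basis_exists[of S] by metis
  obtain g where g: "linear g" "\<forall>x\<in>C. g x = f x"
    using real_vector.linear_independent_extend[OF C(2)] by blast
  have f0: "f 0 = 0" using lmo_zero assms(1,4) subspace_0 by blast
  have sub: "subspace {x. x \<in> S \<and> g x = f x}"
    unfolding subspace_def
  proof (intro conjI allI ballI impI)
    show "0 \<in> {x \<in> S. g x = f x}" using f0 g(1) assms(1) subspace_0 linear_0 by fastforce
  next
    fix x y assume "x \<in> {x \<in> S. g x = f x}" "y \<in> {x \<in> S. g x = f x}"
    then show "x + y \<in> {x \<in> S. g x = f x}"
      using assms(1,4) g(1) unfolding linear_map_on_def
      by (simp add: subspace_add linear_add)
  next
    fix c x assume "x \<in> {x \<in> S. g x = f x}"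
    then show "c *\<^sub>R x \<in> {x \<in> S. g x = f x}"
      using assms(1,4) g(1) unfolding linear_map_on_def
      by (simp add: subspace_scale linear_scale)
  qed
  have "\<forall>x\<in>S. g x = f x"
  proof
    fix x assume "x \<in> S"
    then have "x \<in> span C" using C by blast
    then have "x \<in> {x. x \<in> S \<and> g x = f x}"
      using real_vector.span_induct[of x C "\<lambda>x. x \<in> S \<and> g x = f x"] sub C(1) g(2) by auto
    then show "g x = f x" by simp
  qed
  with g show ?thesis by blast
qed

lemma bound_lin:
  fixes g :: "'v::real_inner \<Rightarrow> 'w::real_normed_vector"
  assumes "S = span B0" "finite B0" "linear g"
  shows "\<exists>K\<ge>0. \<forall>v\<in>S. norm (g v) \<le> K * norm v"
proof -
  obtain C0 where C0: "finite C0" "span C0 = span B0" "pairwise orthogonal C0"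
    using basis_orthogonal[OF assms(2)] by blast
  define C where "C = C0 - {0}"
  have fC: "finite C" using C0 C_def by simp
  have spC: "span C = S" using C0 assms(1) unfolding C_def by (simp add: span_delete_0)
  have orth: "\<And>a b. a \<in> C \<Longrightarrow> b \<in> C \<Longrightarrow> a \<noteq> b \<Longrightarrow> a \<bullet> b = 0"
    using C0(3) unfolding C_def pairwise_def orthogonal_def by blast
  have nz: "\<And>a. a \<in> C \<Longrightarrow> a \<noteq> 0" unfolding C_def by blast
  define K where "K = (\<Sum>c\<in>C. norm (g c) / norm c)"
  have K0: "K \<ge> 0" unfolding K_def by (intro sum_nonneg) simp
  have "norm (g v) \<le> K * norm v" if v: "v \<in> S" for v
  proof -
    have exp: "v = (\<Sum>c\<in>C. ((c \<bullet> v) / (c \<bullet> c)) *\<^sub>R c)"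
    proof (rule vector_eq_dot_span)
      show "v \<in> span C" using v spC by simp
      show "(\<Sum>c\<in>C. ((c \<bullet> v) / (c \<bullet> c)) *\<^sub>R c) \<in> span C"
        by (intro span_sum span_scale span_base)
      fix i assume i: "i \<in> C"
      have "i \<bullet> (\<Sum>c\<in>C. ((c \<bullet> v) / (c \<bullet> c)) *\<^sub>R c) = (\<Sum>c\<in>C. ((c \<bullet> v) / (c \<bullet> c)) * (i \<bullet> c))"
        by (simp add: inner_sum_right)
      also have "\<dots> = (\<Sum>c\<in>C. if c = i then i \<bullet> v else 0)"
        using i orth nz by (intro sum.cong) auto
      also have "\<dots> = i \<bullet> v" using i fC by simp
      finally show "i \<bullet> v = i \<bullet> (\<Sum>c\<in>C. ((c \<bullet> v) / (c \<bullet> c)) *\<^sub>R c)" by simp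
    qed
    have "g v = (\<Sum>c\<in>C. ((c \<bullet> v) / (c \<bullet> c)) *\<^sub>R g c)"
      by (subst exp) (simp add: linear_sum[OF assms(3)] linear_scale[OF assms(3)])
    then have "norm (g v) = norm (\<Sum>c\<in>C. ((c \<bullet> v) / (c \<bullet> c)) *\<^sub>R g c)" by simp
    also have "\<dots> \<le> (\<Sum>c\<in>C. norm (((c \<bullet> v) / (c \<bullet> c)) *\<^sub>R g c))"
      by (rule norm_sum)
    also have "\<dots> \<le> (\<Sum>c\<in>C. norm v * (norm (g c) / norm c))"
    proof (rule sum_mono)
      fix c assume c: "c \<in> C"
      have nc: "norm c > 0" using nz c by simp
      have "norm (((c \<bullet> v) / (c \<bullet> c)) *\<^sub>R g c) = \<bar>c \<bullet> v\<bar> / (norm c)^2 * norm (g c)"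
        by (simp add: power2_norm_eq_inner)
      also have "\<dots> \<le> (norm c * norm v) / (norm c)^2 * norm (g c)"
        by (intro mult_right_mono divide_right_mono Cauchy_Schwarz_ineq2) auto
      also have "\<dots> = norm v * (norm (g c) / norm c)"
        using nc by (simp add: power2_eq_square field_simps)
      finally show "norm (((c \<bullet> v) / (c \<bullet> c)) *\<^sub>R g c) \<le> norm v * (norm (g c) / norm c)" .
    qed
    also have "\<dots> = K * norm v" unfolding K_def by (simp add: sum_distrib_left mult.commute)
    finally show ?thesis .
  qed
  with K0 show ?thesis by blast
qed

lemma opnorm_le:
  assumes "0 \<in> A" "\<forall>v\<in>A. norm (f v) \<le> K * norm v" "K \<ge> 0"
  shows "opnorm_on A f \<le> K"
  unfolding opnorm_on_def
proof (rule cSup_least)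
  show "(\<lambda>v. norm (f v)) ` {v \<in> A. norm v \<le> 1} \<noteq> {}" using assms by auto
  fix x assume "x \<in> (\<lambda>v. norm (f v)) ` {v \<in> A. norm v \<le> 1}"
  then obtain v where "v \<in> A" "norm v \<le> 1" "x = norm (f v)" by auto
  moreover have "K * norm v \<le> K" using \<open>norm v \<le> 1\<close> assms(3) by (simp add: mult_left_le)
  ultimately show "x \<le> K" using assms(2) by force
qed

lemma opnorm_ge:
  assumes "subspace A" "\<forall>v\<in>A. norm (f v) \<le> K * norm v" "K \<ge> 0"
    "\<forall>c. \<forall>x\<in>A. f (c *\<^sub>R x) = c *\<^sub>R f x" "v \<in> A"
  shows "norm (f v) \<le> opnorm_on A f * norm v \<and> 0 \<le> opnorm_on A f"
proof -
  let ?X = "(\<lambda>v. norm (f v)) ` {v \<in> A. norm v \<le> 1}"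
  have bdd: "bdd_above ?X"
  proof (rule bdd_aboveI)
    fix x assume "x \<in> ?X"
    then obtain v where "v \<in> A" "norm v \<le> 1" "x = norm (f v)" by auto
    moreover have "K * norm v \<le> K" using \<open>norm v \<le> 1\<close> assms(3) by (simp add: mult_left_le)
    ultimately show "x \<le> K" using assms(2) by force
  qed
  have f0: "f 0 = 0" using assms(4,1) subspace_0[OF assms(1)] by (metis scale_zero_left)
  have nn: "0 \<le> opnorm_on A f"
    unfolding opnorm_on_def
    using cSup_upper[OF _ bdd, of "norm (f 0)"] subspace_0[OF assms(1)] f0 by force
  show ?thesis
  proof (cases "v = 0")
    case True then show ?thesis using f0 nn by simp
  next
    case False
    let ?w = "(1 / norm v) *\<^sub>R v"
    have w: "?w \<in> A" using assms(1,5) subspace_scale by blast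
    have nw: "norm ?w \<le> 1" using False by simp
    have "norm (f ?w) \<le> opnorm_on A f"
      unfolding opnorm_on_def using w nw by (intro cSup_upper[OF _ bdd]) auto
    moreover have "norm (f ?w) = norm (f v) / norm v" using assms(4,5) by simp
    ultimately have "norm (f v) / norm v \<le> opnorm_on A f" by simp
    then show ?thesis using False nn by (simp add: divide_le_eq)
  qed
qed

lemma opnorm_bound:
  fixes f :: "'v::real_inner \<Rightarrow> 'v"
  assumes "subspace A" "A = span B0" "finite B0" "linear_map_on A T f" "v \<in> A"
  shows "norm (f v) \<le> opnorm_on A f * norm v \<and> 0 \<le> opnorm_on A f"
proof -
  obtain g where g: "linear g" "\<forall>x\<in>A. g x = f x" using ext_lin[OF assms(1-4)] by blast
  obtain K where K: "K \<ge> 0" "\<forall>v\<in>A. norm (g v) \<le> K * norm v" using bound_lin[OF assms(2,3) g(1)] by blast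
  show ?thesis
    using opnorm_ge[OF assms(1) _ K(1) _ assms(5), of f] K(2) g(2) assms(4)
    unfolding linear_map_on_def by auto
qed

lemma fin_inj_surj:
  assumes "subspace S" "S = span B0" "finite B0" "linear_map_on S S f" "inj_on f S"
  shows "f ` S = S"
proof -
  obtain C where C: "C \<subseteq> S" "independent C" "S \<subseteq> span C"
    using real_vector.basis_exists[of S] by metis
  have SC: "S = span C" using C assms(1) by (metis span_minimal subset_antisym)
  have fC: "finite C" "card C \<le> card B0"
    using real_vector.independent_span_bound[OF assms(3) C(2)] C(1) assms(2) by auto
  obtain g where g: "linear g" "\<forall>x\<in>S. g x = f x" using ext_lin[OF assms(1-4)] by blast
  have injg: "inj_on g (span C)" using assms(5) g(2) SC by (metis inj_on_cong)
  have indg: "independent (g ` C)"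
    using real_vector.linear_independent_injective_image[OF g(1) C(2) injg] .
  have cardg: "card (g ` C) = card C" using injg C(1) SC
    by (metis card_image inj_on_subset span_superset)
  have gCS: "g ` C \<subseteq> S" using C(1) g(2) assms(4) unfolding linear_map_on_def by auto
  have spg: "span (g ` C) = S"
  proof (rule ccontr)
    assume ne: "span (g ` C) \<noteq> S"
    have "span (g ` C) \<subseteq> S" using gCS assms(1) by (simp add: span_minimal)
    with ne obtain a where a: "a \<in> S" "a \<notin> span (g ` C)" by blast
    have ind2: "independent (insert a (g ` C))" using real_vector.independent_insertI[OF a(2) indg] .
    have "insert a (g ` C) \<subseteq> span C" using a(1) gCS SC by auto
    from real_vector.independent_span_bound[OF fC(1) ind2 this]
    have "card (insert a (g ` C)) \<le> card C" by blast
    moreover have "a \<notin> g ` C" using a(2) span_base by blast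
    ultimately show False using cardg fC(1) by simp
  qed
  have "g ` S = S" using real_vector.linear_span_image[OF g(1), of C] SC spg by simp
  then show ?thesis using g(2) by (metis image_cong)
qed

lemma lmo_comp:
  assumes "linear_map_on A B f" "linear_map_on B C g"
  shows "linear_map_on A C (\<lambda>x. g (f x))"
  using assms unfolding linear_map_on_def by (auto simp: image_subset_iff)

lemma lmo_sub:
  assumes "linear_map_on A B f" "linear_map_on A B' h"
  shows "linear_map_on A UNIV (\<lambda>x. f x - h x)"
  using assms unfolding linear_map_on_def by (auto simp: algebra_simps scaleR_diff_right)

lemma lmo_diff:
  assumes "subspace A" "linear_map_on A T f" "x \<in> A" "y \<in> A"
  shows "f (x - y) = f x - f y"
proof -
  have y': "(-1) *\<^sub>R y \<in> A" using assms subspace_scale by blast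
  have "f (x + (-1) *\<^sub>R y) = f x + f ((-1) *\<^sub>R y)" using assms(2,3) y' unfolding linear_map_on_def by blast
  also have "f ((-1) *\<^sub>R y) = (-1) *\<^sub>R f y" using assms(2,4) unfolding linear_map_on_def by blast
  finally show ?thesis by simp
qed

lemma e1: "cr < 1 \<Longrightarrow> \<infinity> / (1 - ereal cr) = \<infinity>"
  by (simp add: one_ereal_def divide_ereal_def)
lemma e2: "cr < 1 \<Longrightarrow> ereal br / (1 - ereal cr) = ereal (br / (1 - cr))"
  by (simp add: one_ereal_def divide_ereal_def divide_inverse)
lemma e3: "cr < 1 \<Longrightarrow> 0 < cr \<Longrightarrow> ereal cr * (\<infinity> / (1 - ereal cr)) = \<infinity>"
  by (simp add: e1)
lemma e4: "ereal 0 * (\<infinity> / (1 - ereal 0)) = 0"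
  by (simp add: e1)

theorem mainTheorem14:
  fixes \<Gamma> :: "'g set" and M :: "'m set" and s t :: "'g \<Rightarrow> 'm"
    and gmul :: "'g \<Rightarrow> 'g \<Rightarrow> 'g" and u :: "'m \<Rightarrow> 'g" and i :: "'g \<Rightarrow> 'g"
    and E :: "'m \<Rightarrow> 'v::real_inner set" and lam :: "'g \<Rightarrow> 'v \<Rightarrow> 'v"
  assumes "groupoid \<Gamma> M s t gmul u i"
    and "metric_bundle M E"
    and "unital_pseudo_rep \<Gamma> M s t u E lam"
    and "c_const \<Gamma> s t gmul E lam < 1"
  shows "(\<forall>g\<in>\<Gamma>. bij_betw (lam g) (E (s g)) (E (t g)) \<and>
           ereal (opnorm_on (E (t g)) (inv_into (E (s g)) (lam g)))
             \<le> b_const \<Gamma> s E lam / (1 - c_const \<Gamma> s t gmul E lam)) \<and>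
         (\<forall>g\<in>\<Gamma>. \<forall>h\<in>\<Gamma>. s g = s h \<longrightarrow>
           ereal (opnorm_on (E (t h)) (Delta s gmul i E lam g h))
             \<le> c_const \<Gamma> s t gmul E lam * (b_const \<Gamma> s E lam / (1 - c_const \<Gamma> s t gmul E lam)))"
proof (cases "\<Gamma> = {}")
  case True then show ?thesis by simp
next
  case nonempty: False
  define c where "c = c_const \<Gamma> s t gmul E lam"
  define b where "b = b_const \<Gamma> s E lam"
  have Gst: "\<And>g. g \<in> \<Gamma> \<Longrightarrow> s g \<in> M \<and> t g \<in> M" using assms(1) unfolding groupoid_def by blast
  have Gu: "\<And>x. x \<in> M \<Longrightarrow> u x \<in> \<Gamma> \<and> s (u x) = x \<and> t (u x) = x" using assms(1) unfolding groupoid_def by blast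
  have Gmul: "\<And>g' g. g' \<in> \<Gamma> \<Longrightarrow> g \<in> \<Gamma> \<Longrightarrow> s g' = t g \<Longrightarrow>
      gmul g' g \<in> \<Gamma> \<and> s (gmul g' g) = s g \<and> t (gmul g' g) = t g'"
    using assms(1) unfolding groupoid_def by blast
  have Gassoc: "\<And>g'' g' g. g'' \<in> \<Gamma> \<Longrightarrow> g' \<in> \<Gamma> \<Longrightarrow> g \<in> \<Gamma> \<Longrightarrow> s g'' = t g' \<Longrightarrow> s g' = t g \<Longrightarrow>
      gmul (gmul g'' g') g = gmul g'' (gmul g' g)"
    using assms(1) unfolding groupoid_def by blast
  have Gunit: "\<And>g. g \<in> \<Gamma> \<Longrightarrow> gmul g (u (s g)) = g \<and> gmul (u (t g)) g = g"
    using assms(1) unfolding groupoid_def by blast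
  have Ginv: "\<And>g. g \<in> \<Gamma> \<Longrightarrow> i g \<in> \<Gamma> \<and> s (i g) = t g \<and> t (i g) = s g \<and>
         gmul g (i g) = u (t g) \<and> gmul (i g) g = u (s g)"
    using assms(1) unfolding groupoid_def by blast
  have Fsub: "\<And>x. x \<in> M \<Longrightarrow> subspace (E x)" using assms(2) unfolding metric_bundle_def by blast
  have Fspan: "\<And>x. x \<in> M \<Longrightarrow> \<exists>B. finite B \<and> E x = span B" using assms(2) unfolding metric_bundle_def by blast
  have L: "\<And>g. g \<in> \<Gamma> \<Longrightarrow> linear_map_on (E (s g)) (E (t g)) (lam g)"
    using assms(3) unfolding unital_pseudo_rep_def by blast
  have U: "\<And>x v. x \<in> M \<Longrightarrow> v \<in> E x \<Longrightarrow> lam (u x) v = v"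
    using assms(3) unfolding unital_pseudo_rep_def by blast
  have OB: "norm (f v) \<le> opnorm_on (E x) f * norm v \<and> 0 \<le> opnorm_on (E x) f"
    if hx: "x \<in> M" "linear_map_on (E x) T f" "v \<in> E x" for x and T :: "'v set" and f :: "'v \<Rightarrow> 'v" and v
  proof -
    obtain B where "finite B" "E x = span B" using Fspan[OF hx(1)] by blast
    then show ?thesis using opnorm_bound[OF Fsub[OF hx(1)] _ _ hx(2,3)] by blast
  qed
  have PB0: "norm (lam (gmul g' g) v - lam g' (lam g v))
        \<le> opnorm_on (E (s g)) (\<lambda>v. lam (gmul g' g) v - lam g' (lam g v)) * norm v
      \<and> 0 \<le> opnorm_on (E (s g)) (\<lambda>v. lam (gmul g' g) v - lam g' (lam g v))
      \<and> ereal (opnorm_on (E (s g)) (\<lambda>v. lam (gmul g' g) v - lam g' (lam g v))) \<le> c"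
    if "g' \<in> \<Gamma>" "g \<in> \<Gamma>" "s g' = t g" "v \<in> E (s g)" for g' g v
  proof -
    have m: "gmul g' g \<in> \<Gamma> \<and> s (gmul g' g) = s g \<and> t (gmul g' g) = t g'" using Gmul that by blast
    have l1: "linear_map_on (E (s g)) (E (t g')) (lam (gmul g' g))" using L[of "gmul g' g"] m by simp
    have l2: "linear_map_on (E (s g)) (E (t g')) (\<lambda>x. lam g' (lam g x))"
      using lmo_comp[OF L[OF that(2)]] L[OF that(1)] that(3) by simp
    have "linear_map_on (E (s g)) UNIV (\<lambda>v. lam (gmul g' g) v - lam g' (lam g v))"
      using lmo_sub[OF l1 l2] .
    moreover have "ereal (opnorm_on (E (s g)) (\<lambda>v. lam (gmul g' g) v - lam g' (lam g v))) \<le> c"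
      unfolding c_def c_const_def using that by (intro SUP_upper2[of "(g', g)"]) auto
    ultimately show ?thesis using OB[of "s g"] Gst[OF that(2)] that(4) by blast
  qed
  obtain g0 where g0: "g0 \<in> \<Gamma>" using nonempty by blast
  have c0: "0 \<le> c"
  proof -
    have "s (i g0) = t g0" using Ginv g0 by blast
    moreover have "0 \<in> E (s g0)" using Fsub Gst g0 subspace_0 by blast
    ultimately have "ereal 0 \<le> c" using PB0[of "i g0" g0 0] Ginv[OF g0] g0 by (meson ereal_less_eq(3) order_trans)
    then show ?thesis by (simp add: zero_ereal_def)
  qed
  have c1: "c < 1" using assms(4) c_def by simp
  obtain cr where cr: "c = ereal cr" "0 \<le> cr" "cr < 1"
    using c0 c1 by (cases c) auto
  have PB: "norm (lam (gmul g' g) v - lam g' (lam g v)) \<le> cr * norm v"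
    if "g' \<in> \<Gamma>" "g \<in> \<Gamma>" "s g' = t g" "v \<in> E (s g)" for g' g v
  proof -
    from PB0[OF that] cr have
      "norm (lam (gmul g' g) v - lam g' (lam g v))
        \<le> opnorm_on (E (s g)) (\<lambda>v. lam (gmul g' g) v - lam g' (lam g v)) * norm v"
      "opnorm_on (E (s g)) (\<lambda>v. lam (gmul g' g) v - lam g' (lam g v)) \<le> cr" by auto
    then show ?thesis by (meson mult_right_mono norm_ge_zero order_trans)
  qed
  have LB: "norm (lam g v) \<le> opnorm_on (E (s g)) (lam g) * norm v \<and> 0 \<le> opnorm_on (E (s g)) (lam g)
      \<and> ereal (opnorm_on (E (s g)) (lam g)) \<le> b"
    if "g \<in> \<Gamma>" "v \<in> E (s g)" for g v
    using OB[OF _ L[OF that(1)] that(2)] Gst[OF that(1)]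
    unfolding b_def b_const_def using that(1) by (auto intro: SUP_upper2)
  have b0: "0 \<le> b"
  proof -
    have "0 \<in> E (s g0)" using Fsub Gst g0 subspace_0 by blast
    then have "ereal 0 \<le> b" using LB[OF g0] by (meson ereal_less_eq(3) order_trans)
    then show ?thesis by (simp add: zero_ereal_def)
  qed
  have K1: "(1 - cr) * norm v \<le> norm (lam g' (lam g v))"
    if "g' \<in> \<Gamma>" "g \<in> \<Gamma>" "s g' = t g" "gmul g' g = u (s g)" "v \<in> E (s g)" for g' g v
  proof -
    have "lam (gmul g' g) v = v" using that(4,5) U Gst[OF that(2)] by simp
    then have "norm (v - lam g' (lam g v)) \<le> cr * norm v" using PB[OF that(1,2,3,5)] by simp
    moreover have "norm v \<le> norm (lam g' (lam g v)) + norm (v - lam g' (lam g v))"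
      by (metis add.commute norm_triangle_sub)
    ultimately show ?thesis by (simp add: algebra_simps)
  qed
  have INJ: "inj_on (\<lambda>v. lam g' (lam g v)) (E (s g))"
    if "g' \<in> \<Gamma>" "g \<in> \<Gamma>" "s g' = t g" "gmul g' g = u (s g)" for g' g
  proof (rule inj_onI)
    fix x y assume xy: "x \<in> E (s g)" "y \<in> E (s g)" "lam g' (lam g x) = lam g' (lam g y)"
    have S: "subspace (E (s g))" using Fsub Gst that(2) by blast
    have l2: "linear_map_on (E (s g)) (E (t g')) (\<lambda>x. lam g' (lam g x))"
      using lmo_comp[OF L[OF that(2)]] L[OF that(1)] that(3) by simp
    have d: "x - y \<in> E (s g)" using S xy subspace_diff by blast
    have "lam g' (lam g (x - y)) = 0"
      using lmo_diff[OF S l2 xy(1,2)] xy(3) by simp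
    then have "(1 - cr) * norm (x - y) \<le> 0" using K1[OF that d] by simp
    then have "norm (x - y) \<le> 0" using cr by (simp add: mult_le_0_iff)
    then show "x = y" by simp
  qed
  have BIJ: "bij_betw (lam g) (E (s g)) (E (t g))" if g: "g \<in> \<Gamma>" for g
  proof -
    have ig: "i g \<in> \<Gamma>" "s (i g) = t g" "t (i g) = s g" "gmul g (i g) = u (t g)" "gmul (i g) g = u (s g)"
      using Ginv[OF g] by auto
    have inj1: "inj_on (\<lambda>v. lam (i g) (lam g v)) (E (s g))" using INJ[OF ig(1) g] ig by simp
    have inj: "inj_on (lam g) (E (s g))" using inj_on_imageI2[of "lam (i g)" "lam g"] inj1
      by (simp add: comp_def)
    have inj2: "inj_on (\<lambda>v. lam g (lam (i g) v)) (E (t g))" using INJ[OF g ig(1)] ig by simp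
    have l2: "linear_map_on (E (t g)) (E (t g)) (\<lambda>x. lam g (lam (i g) x))"
      using lmo_comp[OF L[OF ig(1)]] L[OF g] ig by simp
    obtain B where B: "finite B" "E (t g) = span B" using Fspan Gst g by blast
    have surj2: "(\<lambda>x. lam g (lam (i g) x)) ` E (t g) = E (t g)"
      using fin_inj_surj[OF _ B(2) B(1) l2 inj2] Fsub Gst g by blast
    have sub1: "lam (i g) ` E (t g) \<subseteq> E (s g)" using L[OF ig(1)] ig unfolding linear_map_on_def by simp
    have sub2: "lam g ` E (s g) \<subseteq> E (t g)" using L[OF g] unfolding linear_map_on_def by simp
    have "E (t g) \<subseteq> lam g ` E (s g)" using surj2 sub1 by blast
    with sub2 inj show ?thesis unfolding bij_betw_def by blast
  qed
  have VB: "inv_into (E (s g)) (lam g) w \<in> E (s g) \<and> lam g (inv_into (E (s g)) (lam g) w) = w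
      \<and> (1 - cr) * norm (inv_into (E (s g)) (lam g) w) \<le> opnorm_on (E (t g)) (lam (i g)) * norm w
      \<and> ereal (opnorm_on (E (t g)) (lam (i g))) \<le> b"
    if g: "g \<in> \<Gamma>" and w: "w \<in> E (t g)" for g w
  proof -
    have ig: "i g \<in> \<Gamma>" "s (i g) = t g" "t (i g) = s g" "gmul g (i g) = u (t g)" "gmul (i g) g = u (s g)"
      using Ginv[OF g] by auto
    have wim: "w \<in> lam g ` E (s g)" using BIJ[OF g] w unfolding bij_betw_def by simp
    define v where "v = inv_into (E (s g)) (lam g) w"
    have v: "v \<in> E (s g)" "lam g v = w" unfolding v_def using wim
      by (auto intro: inv_into_into f_inv_into_f)
    have "(1 - cr) * norm v \<le> norm (lam (i g) w)" using K1[OF ig(1) g _ _ v(1)] ig v(2) by simp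
    also have "\<dots> \<le> opnorm_on (E (t g)) (lam (i g)) * norm w" using LB[OF ig(1)] ig w by auto
    finally show ?thesis using v LB[OF ig(1), of w] ig w unfolding v_def by auto
  qed
  have part1: "\<forall>g\<in>\<Gamma>. bij_betw (lam g) (E (s g)) (E (t g)) \<and>
           ereal (opnorm_on (E (t g)) (inv_into (E (s g)) (lam g))) \<le> b / (1 - c)"
  proof (intro ballI conjI)
    fix g assume g: "g \<in> \<Gamma>"
    show "bij_betw (lam g) (E (s g)) (E (t g))" using BIJ[OF g] .
    show "ereal (opnorm_on (E (t g)) (inv_into (E (s g)) (lam g))) \<le> b / (1 - c)"
    proof (cases b)
      case PInf then show ?thesis using cr by (simp add: e1)
    next
      case MInf then show ?thesis using b0 by simp
    next
      case (real br)
      have K: "\<forall>w\<in>E (t g). norm (inv_into (E (s g)) (lam g) w) \<le> (br / (1 - cr)) * norm w"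
      proof
        fix w assume w: "w \<in> E (t g)"
        have "(1 - cr) * norm (inv_into (E (s g)) (lam g) w) \<le> opnorm_on (E (t g)) (lam (i g)) * norm w"
          "opnorm_on (E (t g)) (lam (i g)) \<le> br" using VB[OF g w] real by auto
        then have "(1 - cr) * norm (inv_into (E (s g)) (lam g) w) \<le> br * norm w"
          by (meson mult_right_mono norm_ge_zero order_trans)
        then show "norm (inv_into (E (s g)) (lam g) w) \<le> (br / (1 - cr)) * norm w"
          using cr by (simp add: field_simps)
      qed
      have "0 \<in> E (t g)" using Fsub Gst g subspace_0 by blast
      then have "opnorm_on (E (t g)) (inv_into (E (s g)) (lam g)) \<le> br / (1 - cr)"
        using opnorm_le[OF _ K] b0 real cr by simp
      then show ?thesis using real cr by (simp add: e2)
    qed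
  qed
  have part2: "\<forall>g\<in>\<Gamma>. \<forall>h\<in>\<Gamma>. s g = s h \<longrightarrow>
           ereal (opnorm_on (E (t h)) (Delta s gmul i E lam g h)) \<le> c * (b / (1 - c))"
  proof (intro ballI impI)
    fix g h assume g: "g \<in> \<Gamma>" and h: "h \<in> \<Gamma>" and sgh: "s g = s h"
    have ih: "i h \<in> \<Gamma>" "s (i h) = t h" "t (i h) = s h" "gmul (i h) h = u (s h)"
      using Ginv[OF h] by auto
    define k where "k = gmul g (i h)"
    have k: "k \<in> \<Gamma>" "s k = t h" using Gmul[OF g ih(1)] ih sgh unfolding k_def by auto
    have kh: "gmul k h = g" unfolding k_def
      using Gassoc[OF g ih(1) h] ih sgh Gunit[OF g] by simp
    have D: "norm (Delta s gmul i E lam g h w) \<le> cr * norm (inv_into (E (s h)) (lam h) w)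
       \<and> (1 - cr) * norm (inv_into (E (s h)) (lam h) w) \<le> opnorm_on (E (t h)) (lam (i h)) * norm w
       \<and> ereal (opnorm_on (E (t h)) (lam (i h))) \<le> b"
      if w: "w \<in> E (t h)" for w
    proof -
      let ?v = "inv_into (E (s h)) (lam h) w"
      have v: "?v \<in> E (s h)" "lam h ?v = w" using VB[OF h w] by auto
      have "Delta s gmul i E lam g h w = lam (gmul k h) ?v - lam k (lam h ?v)"
        unfolding Delta_def using kh v(2) k_def by simp
      then show ?thesis using PB[OF k(1) h k(2) v(1)] VB[OF h w] by simp
    qed
    have z: "0 \<in> E (t h)" using Fsub Gst h subspace_0 by blast
    show "ereal (opnorm_on (E (t h)) (Delta s gmul i E lam g h)) \<le> c * (b / (1 - c))"
    proof (cases b)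
      case MInf then show ?thesis using b0 by simp
    next
      case PInf
      show ?thesis
      proof (cases "cr = 0")
        case True
        have "\<forall>w\<in>E (t h). norm (Delta s gmul i E lam g h w) \<le> 0 * norm w" using D True by simp
        then have "opnorm_on (E (t h)) (Delta s gmul i E lam g h) \<le> 0" using opnorm_le[OF z _ order_refl] by blast
        then show ?thesis using True cr PInf e4 by simp
      next
        case False
        then have "cr > 0" using cr by simp
        then show ?thesis using cr PInf e3 by simp
      qed
    next
      case (real br)
      have K: "\<forall>w\<in>E (t h). norm (Delta s gmul i E lam g h w) \<le> (cr * (br / (1 - cr))) * norm w"
      proof
        fix w assume w: "w \<in> E (t h)"
        let ?v = "inv_into (E (s h)) (lam h) w"
        have a: "norm (Delta s gmul i E lam g h w) \<le> cr * norm ?v"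
          "(1 - cr) * norm ?v \<le> opnorm_on (E (t h)) (lam (i h)) * norm w"
          "opnorm_on (E (t h)) (lam (i h)) \<le> br" using D[OF w] real by auto
        then have "(1 - cr) * norm ?v \<le> br * norm w"
          by (meson mult_right_mono norm_ge_zero order_trans)
        then have "norm ?v \<le> (br / (1 - cr)) * norm w" using cr by (simp add: field_simps)
        then have "cr * norm ?v \<le> cr * ((br / (1 - cr)) * norm w)" using cr by (intro mult_left_mono) auto
        then show "norm (Delta s gmul i E lam g h w) \<le> (cr * (br / (1 - cr))) * norm w"
          using a(1) by simp
      qed
      have "opnorm_on (E (t h)) (Delta s gmul i E lam g h) \<le> cr * (br / (1 - cr))"
        using opnorm_le[OF z K] b0 real cr by simp
      then show ?thesis using real cr by (simp add: e2)
    qed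
  qed
  show ?thesis using part1 part2 unfolding c_def b_def by blast
qed

end
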